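(* Let $I$ be a finite poset whose Hasse digraph $\mathcal H(I)$ is isomorphic to one of the following digraphs $\mathcal F_1,\dots,\mathcal F_7$, where an "edge" means an arrow that may be oriented either way. Then $I$ is indefinite. $\mathcal F_1$: vertices $a_1,a_2,b_1,b_2,c$; arrows $a_1\to b_1,a_1\to b_2,a_2\to b_1,a_2\to b_2$; an edge between $a_2$ and $c$. $\mathcal F_2$: vertices $a_1,a_2,b_1,b_2,c$; arrows $a_1\to b_1,a_1\to b_2,a_2\to b_1,a_2\to b_2$; an edge between $b_2$ and $c$. $\mathcal F_3$: a tree with one vertex of degree $3$ whose three arms contain $4$, $3$ and $1$ vertices, all edges oriented arbitrarily ($9$ vertices). $\mathcal F_4$: a tree with one vertex of degree $3$ whose three arms contain $6$, $2$ and $1$ vertices, all edges oriented arbitrarily ($10$ vertices). $\mathcal F_5$: vertices $x_1,\dots,x_8,u,c$; arrows $x_1\to x_2\to\cdots\to x_8$, $x_1\to u$, $u\to x_8$; an edge between $x_8$ and $c$. $\mathcal F_6$: vertices $x_1,\dots,x_8,u,c$; arrows $x_1\to x_2\to\cdots\to x_8$, $x_1\to u$, $u\to x_8$; an edge between $x_1$ and $c$. $\mathcal F_7$: vertices $x_1,\dots,x_8,u_1,u_2$; arrows $x_1\to x_2\to\cdots\to x_8$, $x_1\to u_1\to u_2\to x_8$.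
   Context: For a finite poset $I$ on $\{1,\dots,n\}$: $C_I=[c_{ij}]$ with $c_{ij}=1$ iff $i\preceq_I j$ (else $0$), $G_I=\tfrac12(C_I+C_I^{tr})$; $I$ is indefinite if $G_I$ is neither positive nor negative semi-definite. The Hasse digraph $\mathcal H(I)$ has an arrow $i\to j$ iff $i\prec_I j$ and there is no $k$ with $i\prec_I k\prec_I j$. *)

theory Defs
  imports Complex_Main
begin

text \<open>A finite poset I on {1..n} is a relation r with partial_order_on {1..n} r;
  (i,j) \<in> r means i \<preceq>_I j.\<close>

definition incidence_matrix :: "(nat \<times> nat) set \<Rightarrow> nat \<Rightarrow> nat \<Rightarrow> real" where
  "incidence_matrix r i j = (if (i, j) \<in> r then 1 else 0)"

definition sym_gram :: "(nat \<times> nat) set \<Rightarrow> nat \<Rightarrow> nat \<Rightarrow> real" where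
  "sym_gram r i j = (incidence_matrix r i j + incidence_matrix r j i) / 2"

definition quad_form :: "nat \<Rightarrow> (nat \<Rightarrow> nat \<Rightarrow> real) \<Rightarrow> (nat \<Rightarrow> real) \<Rightarrow> real" where
  "quad_form n M x = (\<Sum>i=1..n. \<Sum>j=1..n. x i * M i j * x j)"

definition pos_semidef :: "nat \<Rightarrow> (nat \<Rightarrow> nat \<Rightarrow> real) \<Rightarrow> bool" where
  "pos_semidef n M \<longleftrightarrow> (\<forall>x. quad_form n M x \<ge> 0)"

definition neg_semidef :: "nat \<Rightarrow> (nat \<Rightarrow> nat \<Rightarrow> real) \<Rightarrow> bool" where
  "neg_semidef n M \<longleftrightarrow> (\<forall>x. quad_form n M x \<le> 0)"

definition indefinite_poset :: "nat \<Rightarrow> (nat \<times> nat) set \<Rightarrow> bool" where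
  "indefinite_poset n r \<longleftrightarrow> \<not> pos_semidef n (sym_gram r) \<and> \<not> neg_semidef n (sym_gram r)"

type_synonym digraph = "nat set \<times> (nat \<times> nat) set"

definition hasse :: "nat \<Rightarrow> (nat \<times> nat) set \<Rightarrow> digraph" where
  "hasse n r = ({1..n},
     {(i, j). i \<in> {1..n} \<and> j \<in> {1..n} \<and> (i, j) \<in> r \<and> i \<noteq> j \<and>
        \<not> (\<exists>k \<in> {1..n}. (i, k) \<in> r \<and> i \<noteq> k \<and> (k, j) \<in> r \<and> k \<noteq> j)})"

definition digraph_iso :: "digraph \<Rightarrow> digraph \<Rightarrow> bool" where
  "digraph_iso D D' \<longleftrightarrow> (\<exists>f. bij_betw f (fst D) (fst D') \<and>
     (\<forall>u \<in> fst D. \<forall>v \<in> fst D. (u, v) \<in> snd D \<longleftrightarrow> (f u, f v) \<in> snd D'))"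

definition orient :: "bool \<Rightarrow> nat \<times> nat \<Rightarrow> nat \<times> nat" where
  "orient b e = (if b then e else (snd e, fst e))"

definition oriented_edges :: "(nat \<Rightarrow> bool) \<Rightarrow> (nat \<times> nat) list \<Rightarrow> (nat \<times> nat) set" where
  "oriented_edges \<sigma> es = {orient (\<sigma> k) (es ! k) | k. k < length es}"

text \<open>F1, F2: a1=0, a2=1, b1=2, b2=3, c=4.\<close>
definition F1 :: "bool \<Rightarrow> digraph" where
  "F1 b = ({0..4}, {(0,2),(0,3),(1,2),(1,3), orient b (1,4)})"

definition F2 :: "bool \<Rightarrow> digraph" where
  "F2 b = ({0..4}, {(0,2),(0,3),(1,2),(1,3), orient b (3,4)})"

text \<open>F3: centre 0, arms 1-2-3-4, 5-6-7, 8 (9 vertices).\<close>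
definition F3 :: "(nat \<Rightarrow> bool) \<Rightarrow> digraph" where
  "F3 \<sigma> = ({0..8}, oriented_edges \<sigma>
     [(0,1),(1,2),(2,3),(3,4),(0,5),(5,6),(6,7),(0,8)])"

text \<open>F4: centre 0, arms 1-2-3-4-5-6, 7-8, 9 (10 vertices).\<close>
definition F4 :: "(nat \<Rightarrow> bool) \<Rightarrow> digraph" where
  "F4 \<sigma> = ({0..9}, oriented_edges \<sigma>
     [(0,1),(1,2),(2,3),(3,4),(4,5),(5,6),(0,7),(7,8),(0,9)])"

text \<open>F5, F6, F7: x1..x8 = 0..7; F5/F6: u = 8, c = 9; F7: u1 = 8, u2 = 9.\<close>
definition chain8 :: "(nat \<times> nat) set" where
  "chain8 = {(i, i+1) | i. i < 7}"

definition F5 :: "bool \<Rightarrow> digraph" where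
  "F5 b = ({0..9}, chain8 \<union> {(0,8),(8,7), orient b (7,9)})"

definition F6 :: "bool \<Rightarrow> digraph" where
  "F6 b = ({0..9}, chain8 \<union> {(0,8),(8,7), orient b (0,9)})"

definition F7 :: digraph where
  "F7 = ({0..9}, chain8 \<union> {(0,8),(8,9),(9,7)})"

end

theory Submission
  imports Defs
begin

definition Qf :: "nat set \<Rightarrow> (nat \<times> nat) set \<Rightarrow> (nat \<Rightarrow> real) \<Rightarrow> real" where
  "Qf V E y = (\<Sum>a\<in>V. \<Sum>b\<in>V. y a * y b * (if (a, b) \<in> E\<^sup>* then 1 else 0))"

lemma hasse_rtr_aux:
  assumes po: "partial_order_on {1..n} r"
  shows "card {k\<in>{1..n}. (i,k)\<in>r \<and> (k,j)\<in>r} = N \<Longrightarrow> i\<in>{1..n} \<Longrightarrow> j\<in>{1..n} \<Longrightarrow> (i,j)\<in>r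
     \<Longrightarrow> (i,j) \<in> (snd (hasse n r))\<^sup>*"
proof (induction N arbitrary: i j rule: less_induct)
  case (less N)
  have tr: "trans r" and an: "antisym r" and rf: "refl_on {1..n} r"
    using partial_order_onD[OF po] by auto
  show ?case
  proof (cases "i = j")
    case True thus ?thesis by simp
  next
    case False
    show ?thesis
    proof (cases "\<exists>k\<in>{1..n}. (i,k)\<in>r \<and> i\<noteq>k \<and> (k,j)\<in>r \<and> k\<noteq>j")
      case False
      then have "(i,j) \<in> snd (hasse n r)" using less.prems \<open>i\<noteq>j\<close> by (auto simp: hasse_def)
      thus ?thesis by auto
    next
      case True
      then obtain k where k: "k\<in>{1..n}" "(i,k)\<in>r" "i\<noteq>k" "(k,j)\<in>r" "k\<noteq>j" by blast
      define I where "I = (\<lambda>a b. {x\<in>{1..n}. (a,x)\<in>r \<and> (x,b)\<in>r})"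
      have fin: "finite (I i j)" unfolding I_def by auto
      have jin: "j \<in> I i j" using less.prems rf unfolding I_def refl_on_def by auto
      have iin: "i \<in> I i j" using less.prems rf unfolding I_def refl_on_def by auto
      have s1: "I i k \<subset> I i j"
      proof
        show "I i k \<subseteq> I i j" unfolding I_def using k tr by (auto dest: transD)
        show "I i k \<noteq> I i j"
        proof
          assume "I i k = I i j"
          then have "(j,k) \<in> r" using jin unfolding I_def by auto
          then show False using k an by (auto dest: antisymD)
        qed
      qed
      have s2: "I k j \<subset> I i j"
      proof
        show "I k j \<subseteq> I i j" unfolding I_def using k tr by (auto dest: transD)
        show "I k j \<noteq> I i j"
        proof
          assume "I k j = I i j"
          then have "(k,i) \<in> r" using iin unfolding I_def by auto
          then show False using k an by (auto dest: antisymD)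
        qed
      qed
      have c1: "card (I i k) < N" using psubset_card_mono[OF fin s1] less.prems unfolding I_def by simp
      have c2: "card (I k j) < N" using psubset_card_mono[OF fin s2] less.prems unfolding I_def by simp
      have "(i,k) \<in> (snd (hasse n r))\<^sup>*" using less.IH[OF c1[unfolded I_def] refl] less.prems k by auto
      moreover have "(k,j) \<in> (snd (hasse n r))\<^sup>*" using less.IH[OF c2[unfolded I_def] refl] less.prems k by auto
      ultimately show ?thesis by auto
    qed
  qed
qed

lemma hasse_rtr:
  assumes po: "partial_order_on {1..n} r" and "i\<in>{1..n}" "j\<in>{1..n}"
  shows "(i,j)\<in>r \<longleftrightarrow> (i,j) \<in> (snd (hasse n r))\<^sup>*"
proof
  assume "(i,j)\<in>r" thus "(i,j) \<in> (snd (hasse n r))\<^sup>*" using hasse_rtr_aux[OF po refl] assms by auto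
next
  have tr: "trans r" and rf: "refl_on {1..n} r"
    using partial_order_onD[OF po] by auto
  assume "(i,j) \<in> (snd (hasse n r))\<^sup>*"
  then show "(i,j)\<in>r"
  proof (induction rule: rtrancl_induct)
    case base thus ?case using rf assms by (auto simp: refl_on_def)
  next
    case (step y z) thus ?case using tr by (auto simp: hasse_def dest: transD)
  qed
qed

lemma iso_rtr:
  assumes po: "partial_order_on {1..n} r" and iso: "digraph_iso (V,E) (hasse n r)"
    and sub: "E \<subseteq> V \<times> V"
  obtains f where "bij_betw f V {1..n}" "\<forall>a\<in>V. \<forall>b\<in>V. ((f a, f b)\<in>r \<longleftrightarrow> (a,b)\<in>E\<^sup>*)"
proof -
  obtain f where bij: "bij_betw f V {1..n}" and
    ed: "\<forall>u\<in>V. \<forall>v\<in>V. (u, v) \<in> E \<longleftrightarrow> (f u, f v) \<in> snd (hasse n r)"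
    using iso unfolding digraph_iso_def by (auto simp: hasse_def)
  define H where "H = snd (hasse n r)"
  have Hsub: "H \<subseteq> {1..n} \<times> {1..n}" unfolding H_def hasse_def by auto
  define g where "g = inv_into V f"
  have fg: "\<And>i. i\<in>{1..n} \<Longrightarrow> f (g i) = i \<and> g i \<in> V"
    using bij unfolding g_def by (metis bij_betw_def bij_betw_inv_into_right inv_into_into)
  have gf: "\<And>a. a\<in>V \<Longrightarrow> g (f a) = a"
    using bij unfolding g_def by (metis bij_betw_inv_into_left)
  have fV: "\<And>a. a\<in>V \<Longrightarrow> f a \<in> {1..n}" using bij by (auto simp: bij_betw_def)
  have A: "(f a, f b) \<in> H\<^sup>*" if "(a,b)\<in>E\<^sup>*" for a b
    using that
  proof (induction rule: rtrancl_induct)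
    case base thus ?case by simp
  next
    case (step y z)
    then have "(f y, f z) \<in> H" using ed sub unfolding H_def by auto
    thus ?case using step by auto
  qed
  have B: "(g i, g j) \<in> E\<^sup>*" if "(i,j)\<in>H\<^sup>*" for i j
    using that
  proof (induction rule: rtrancl_induct)
    case base thus ?case by simp
  next
    case (step y z)
    then have yz: "y\<in>{1..n}" "z\<in>{1..n}" using Hsub by auto
    then have "(g y, g z) \<in> E" using ed fg step(2) unfolding H_def by metis
    thus ?case using step by auto
  qed
  show ?thesis
  proof (rule that[OF bij], intro ballI)
    fix a b assume ab: "a\<in>V" "b\<in>V"
    show "((f a, f b)\<in>r \<longleftrightarrow> (a,b)\<in>E\<^sup>*)"
    proof
      assume "(f a, f b)\<in>r"
      then have "(f a, f b) \<in> H\<^sup>*" using hasse_rtr[OF po fV fV] ab unfolding H_def by auto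
      then show "(a,b)\<in>E\<^sup>*" using B gf ab by fastforce
    next
      assume "(a,b)\<in>E\<^sup>*"
      then show "(f a, f b)\<in>r" using A hasse_rtr[OF po fV fV] ab unfolding H_def by auto
    qed
  qed
qed

lemma quad_sym:
  "quad_form n (sym_gram r) x = (\<Sum>i\<in>{1..n}. \<Sum>j\<in>{1..n}. x i * x j * (if (i,j)\<in>r then 1 else 0))"
proof -
  define S where "S = (\<Sum>i\<in>{1..n}. \<Sum>j\<in>{1..n}. x i * x j * (if (i,j)\<in>r then 1 else 0))"
  have "(\<Sum>i\<in>{1..n}. \<Sum>j\<in>{1..n}. x i * x j * (if (j,i)\<in>r then 1 else 0)) = S"
    unfolding S_def by (subst sum.swap) (simp add: mult.commute)
  moreover have "quad_form n (sym_gram r) x = (S + (\<Sum>i\<in>{1..n}. \<Sum>j\<in>{1..n}. x i * x j * (if (j,i)\<in>r then 1 else 0))) / 2"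
    unfolding quad_form_def sym_gram_def incidence_matrix_def S_def
    by (simp add: sum.distrib[symmetric] sum_divide_distrib algebra_simps)
  ultimately show ?thesis unfolding S_def by simp
qed

lemma not_neg:
  assumes po: "partial_order_on {1..n} r" and n: "n \<ge> 1"
  shows "\<not> neg_semidef n (sym_gram r)"
proof -
  define x :: "nat \<Rightarrow> real" where "x = (\<lambda>i. if i = 1 then 1 else 0)"
  have "(1,1) \<in> r" using partial_order_onD(1)[OF po] n by (auto simp: refl_on_def)
  have e: "\<And>i j. x i * x j * (if (i,j)\<in>r then 1 else 0) = (if j = 1 then (if i = 1 then 1 else 0) else 0)"
    using \<open>(1,1) \<in> r\<close> by (simp add: x_def)
  have "quad_form n (sym_gram r) x = 1"
    unfolding quad_sym e using n by (simp add: sum.delta)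
  thus ?thesis unfolding neg_semidef_def by (metis not_one_le_zero)
qed

lemma transfer:
  assumes po: "partial_order_on {1..n} r" and iso: "digraph_iso (V,E) (hasse n r)"
    and sub: "E \<subseteq> V \<times> V" and ne: "V \<noteq> {}"
    and neg: "(\<forall>a\<in>V. \<forall>b\<in>V. (a,b)\<in>E\<^sup>* \<longrightarrow> (b,a)\<in>E\<^sup>* \<longrightarrow> a = b) \<Longrightarrow> \<exists>y. Qf V E y < 0"
  shows "indefinite_poset n r"
proof -
  obtain f where bij: "bij_betw f V {1..n}" and rr: "\<forall>a\<in>V. \<forall>b\<in>V. ((f a, f b)\<in>r \<longleftrightarrow> (a,b)\<in>E\<^sup>*)"
    using iso_rtr[OF po iso sub] by blast
  have n: "n \<ge> 1" using bij ne by (auto simp: bij_betw_def)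
  have an: "antisym r" using partial_order_onD[OF po] by auto
  have "\<forall>a\<in>V. \<forall>b\<in>V. (a,b)\<in>E\<^sup>* \<longrightarrow> (b,a)\<in>E\<^sup>* \<longrightarrow> a = b"
  proof (intro ballI impI)
    fix a b assume ab: "a\<in>V" "b\<in>V" "(a,b)\<in>E\<^sup>*" "(b,a)\<in>E\<^sup>*"
    have "(f a, f b)\<in>r" "(f b, f a)\<in>r" using rr ab by auto
    then have "f a = f b" using an by (auto dest: antisymD)
    then show "a = b" using bij ab by (auto simp: bij_betw_def inj_on_def)
  qed
  then obtain y where y: "Qf V E y < 0" using neg by blast
  define g where "g = inv_into V f"
  have gf: "\<And>a. a\<in>V \<Longrightarrow> g (f a) = a"
    using bij unfolding g_def by (metis bij_betw_inv_into_left)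
  have "quad_form n (sym_gram r) (y \<circ> g) = Qf V E y"
    unfolding quad_sym Qf_def
    apply (subst sum.reindex_bij_betw[OF bij, symmetric])
    apply (subst sum.reindex_bij_betw[OF bij, symmetric])
    using rr gf by (intro sum.cong refl) auto
  then have "\<not> pos_semidef n (sym_gram r)" using y unfolding pos_semidef_def by (metis not_le)
  thus ?thesis using not_neg[OF po n] unfolding indefinite_poset_def by simp
qed

lemma tree_Qf:
  assumes fin: "finite V" and sub: "E \<subseteq> V \<times> V" and irr: "\<And>a. (a,a) \<notin> E"
    and an: "\<forall>a\<in>V. \<forall>b\<in>V. (a,b)\<in>E\<^sup>* \<longrightarrow> (b,a)\<in>E\<^sup>* \<longrightarrow> a = b"
    and br: "\<And>w v1 v2. (v1,w)\<in>E \<Longrightarrow> (v2,w)\<in>E \<Longrightarrow> v1\<noteq>v2 \<Longrightarrow>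
       \<exists>S. v1\<in>S \<and> v2\<notin>S \<and> (\<forall>a b. (a,b)\<in>E \<longrightarrow> a\<noteq>w \<longrightarrow> b\<noteq>w \<longrightarrow> (a\<in>S \<longleftrightarrow> b\<in>S))"
  shows "Qf V E (\<lambda>b. z b - (\<Sum>c\<in>{c\<in>V. (b,c)\<in>E}. z c)) =
         (\<Sum>a\<in>V. z a * z a) - (\<Sum>p\<in>E. z (fst p) * z (snd p))"
proof -
  have cyc: False if aa: "(a,a)\<in>E\<^sup>+" for a
  proof -
    obtain c where c: "(a,c)\<in>E" "(c,a)\<in>E\<^sup>*" using tranclD[OF aa] by blast
    then have "a\<in>V" "c\<in>V" using sub by auto
    moreover have "(a,c)\<in>E\<^sup>*" using c by auto
    ultimately have "a = c" using an c by blast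
    thus False using c irr by auto
  qed
  have uniq: "v1 = v2" if u1: "(u,v1)\<in>E\<^sup>*" and u2: "(u,v2)\<in>E\<^sup>*" and e1: "(v1,w)\<in>E" and e2: "(v2,w)\<in>E"
    for u v1 v2 w
  proof (rule ccontr)
    assume ne: "v1 \<noteq> v2"
    obtain S where S: "v1\<in>S" "v2\<notin>S" "\<forall>a b. (a,b)\<in>E \<longrightarrow> a\<noteq>w \<longrightarrow> b\<noteq>w \<longrightarrow> (a\<in>S \<longleftrightarrow> b\<in>S)"
      using br[OF e1 e2 ne] by blast
    have claim: "(k,w)\<in>E\<^sup>+ \<longrightarrow> (k\<in>S \<longleftrightarrow> u\<in>S)" if "(u,k)\<in>E\<^sup>*" for k
      using that
    proof (induction rule: rtrancl_induct)
      case base thus ?case by simp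
    next
      case (step k k')
      show ?case
      proof
        assume kw: "(k',w)\<in>E\<^sup>+"
        have "(k,w)\<in>E\<^sup>+" using step(2) kw by auto
        then have IH: "k\<in>S \<longleftrightarrow> u\<in>S" using step(3) by blast
        have "k' \<noteq> w" using kw cyc by blast
        moreover have "k \<noteq> w"
        proof
          assume "k = w"
          then have "(w,w)\<in>E\<^sup>+" using step(2) kw by auto
          thus False using cyc by blast
        qed
        ultimately have "k\<in>S \<longleftrightarrow> k'\<in>S" using S(3) step(2) by blast
        thus "k'\<in>S \<longleftrightarrow> u\<in>S" using IH by blast
      qed
    qed
    have "v1\<in>S \<longleftrightarrow> u\<in>S" using claim[OF u1] e1 by auto
    moreover have "v2\<in>S \<longleftrightarrow> u\<in>S" using claim[OF u2] e2 by auto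
    ultimately show False using S by blast
  qed
  define x where "x = (\<lambda>b. z b - (\<Sum>c\<in>{c\<in>V. (b,c)\<in>E}. z c))"
  have row: "(\<Sum>b\<in>{b\<in>V. (a,b)\<in>E\<^sup>*}. x b) = z a" if aV: "a\<in>V" for a
  proof -
    define U where "U = {b\<in>V. (a,b)\<in>E\<^sup>*}"
    have finU: "finite U" using fin unfolding U_def by auto
    have aU: "a\<in>U" using aV unfolding U_def by auto
    have inner: "(\<Sum>b\<in>{b\<in>U. (b,c)\<in>E}. z c) = (if c\<in>U \<and> c\<noteq>a then z c else 0)" if cV: "c\<in>V" for c
    proof (cases "c\<in>U \<and> c\<noteq>a")
      case True
      then have "(a,c)\<in>E\<^sup>*" unfolding U_def by auto
      then obtain b0 where b0: "(a,b0)\<in>E\<^sup>*" "(b0,c)\<in>E" using True by (auto elim: rtranclE)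
      have "b0\<in>V" using b0 sub by auto
      then have "{b\<in>U. (b,c)\<in>E} = {b0}" using b0 uniq unfolding U_def by blast
      thus ?thesis using True by simp
    next
      case False
      have e0: "{b\<in>U. (b,c)\<in>E} = {}"
      proof (rule ccontr)
        assume "{b\<in>U. (b,c)\<in>E} \<noteq> {}"
        then obtain b where b: "(a,b)\<in>E\<^sup>*" "(b,c)\<in>E" unfolding U_def by auto
        then have ac: "(a,c)\<in>E\<^sup>*" by auto
        show False
        proof (cases "c = a")
          case True
          then have "(a,a)\<in>E\<^sup>+" using b by auto
          thus False using cyc by blast
        next
          case ne: False
          then have "c\<notin>U" using False by blast
          thus False using ac cV unfolding U_def by auto
        qed
      qed
      show ?thesis unfolding e0 using False by auto
    qed
    have "(\<Sum>b\<in>U. x b) = (\<Sum>b\<in>U. z b) - (\<Sum>b\<in>U. \<Sum>c\<in>{c\<in>V. (b,c)\<in>E}. z c)"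
      unfolding x_def by (simp add: sum_subtractf)
    also have "(\<Sum>b\<in>U. \<Sum>c\<in>{c\<in>V. (b,c)\<in>E}. z c) = (\<Sum>c\<in>V. \<Sum>b\<in>{b\<in>U. (b,c)\<in>E}. z c)"
      by (rule sum.swap_restrict[OF finU fin])
    also have "\<dots> = (\<Sum>c\<in>V. if c\<in>U \<and> c\<noteq>a then z c else 0)"
      using inner by (intro sum.cong) auto
    also have "\<dots> = (\<Sum>c\<in>U - {a}. z c)"
      using fin by (simp add: sum.If_cases U_def Int_def conj_commute) (intro sum.cong; auto)
    also have "\<dots> = (\<Sum>c\<in>U. z c) - z a"
      using finU aU by (simp add: sum_diff1)
    finally show ?thesis unfolding U_def by simp
  qed
  have "Qf V E x = (\<Sum>a\<in>V. x a * (\<Sum>b\<in>{b\<in>V. (a,b)\<in>E\<^sup>*}. x b))"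
    unfolding Qf_def using fin
    by (intro sum.cong refl) (simp add: sum.inter_filter sum_distrib_left if_distrib cong: if_cong)
  also have "\<dots> = (\<Sum>a\<in>V. x a * z a)" using row by (intro sum.cong) auto
  also have "\<dots> = (\<Sum>a\<in>V. z a * z a) - (\<Sum>a\<in>V. \<Sum>c\<in>{c\<in>V. (a,c)\<in>E}. z a * z c)"
    unfolding x_def by (simp add: algebra_simps sum_subtractf sum_distrib_left)
  also have "(\<Sum>a\<in>V. \<Sum>c\<in>{c\<in>V. (a,c)\<in>E}. z a * z c) = (\<Sum>p\<in>Sigma V (\<lambda>a. {c\<in>V. (a,c)\<in>E}). z (fst p) * z (snd p))"
    using fin by (subst sum.Sigma) (auto simp: case_prod_beta)
  also have "Sigma V (\<lambda>a. {c\<in>V. (a,c)\<in>E}) = E" using sub by auto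
  finally show ?thesis unfolding x_def .
qed

definition goodD :: "digraph \<Rightarrow> bool" where
  "goodD D \<longleftrightarrow> finite (fst D) \<and> snd D \<subseteq> fst D \<times> fst D \<and> fst D \<noteq> {} \<and>
     ((\<forall>a\<in>fst D. \<forall>b\<in>fst D. (a,b)\<in>(snd D)\<^sup>* \<longrightarrow> (b,a)\<in>(snd D)\<^sup>* \<longrightarrow> a = b) \<longrightarrow>
      (\<exists>y. Qf (fst D) (snd D) y < 0))"

definition adjU :: "(nat \<times> nat) list \<Rightarrow> nat \<Rightarrow> nat \<Rightarrow> bool" where
  "adjU es w v \<longleftrightarrow> (\<exists>k<length es. es!k = (w,v) \<or> es!k = (v,w))"

lemma oe_mem:
  assumes "(a,b) \<in> oriented_edges \<sigma> es"
  shows "\<exists>k<length es. es!k = (a,b) \<or> es!k = (b,a)"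
  using assms unfolding oriented_edges_def orient_def
  by (auto split: if_splits)

lemma adjU_set: "adjU es w v \<longleftrightarrow> (w,v)\<in>set es \<or> (v,w)\<in>set es"
  unfolding adjU_def in_set_conv_nth by blast

lemma h_orient: "z (fst (orient b e)) * z (snd (orient b e)) = (z (fst e) * z (snd e) :: real)"
  by (cases b) (simp_all add: orient_def mult.commute)

lemma tree_case:
  fixes z :: "nat \<Rightarrow> real"
  assumes fin: "finite V" and ne: "V \<noteq> {}"
    and ends: "\<forall>k<length es. fst(es!k)\<in>V \<and> snd(es!k)\<in>V \<and> fst(es!k) \<noteq> snd(es!k)"
    and dist: "distinct es" and nrev: "\<forall>(a,b)\<in>set es. (b,a) \<notin> set es"
    and brU: "\<And>w v1 v2. adjU es w v1 \<Longrightarrow> adjU es w v2 \<Longrightarrow> v1\<noteq>v2 \<Longrightarrow>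
       \<exists>S. v1\<in>S \<and> v2\<notin>S \<and> (\<forall>k<length es. fst(es!k)\<noteq>w \<longrightarrow> snd(es!k)\<noteq>w \<longrightarrow> (fst(es!k)\<in>S \<longleftrightarrow> snd(es!k)\<in>S))"
    and neg: "(\<Sum>a\<in>V. z a * z a) - sum_list (map (\<lambda>e. z (fst e) * z (snd e)) es) < 0"
  shows "goodD (V, oriented_edges \<sigma> es)"
proof -
  define E where "E = oriented_edges \<sigma> es"
  have mem: "\<exists>k<length es. es!k = (a,b) \<or> es!k = (b,a)" if "(a,b)\<in>E" for a b
    using oe_mem that unfolding E_def by blast
  have sub: "E \<subseteq> V \<times> V"
  proof
    fix p assume "p\<in>E"
    then obtain a b where p: "p = (a,b)" "(a,b)\<in>E" by (cases p) auto
    then obtain k where "k<length es" "es!k = (a,b) \<or> es!k = (b,a)" using mem by blast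
    thus "p\<in>V\<times>V" using ends p by auto
  qed
  have irr: "(a,a)\<notin>E" for a
  proof
    assume "(a,a)\<in>E"
    then obtain k where k: "k<length es" "es!k=(a,a)" using mem by blast
    then have "fst(es!k) = snd(es!k)" by simp
    then show False using ends k(1) by blast
  qed
  have br: "\<exists>S. v1\<in>S \<and> v2\<notin>S \<and> (\<forall>a b. (a,b)\<in>E \<longrightarrow> a\<noteq>w \<longrightarrow> b\<noteq>w \<longrightarrow> (a\<in>S \<longleftrightarrow> b\<in>S))"
    if e1: "(v1,w)\<in>E" and e2: "(v2,w)\<in>E" and ne12: "v1\<noteq>v2" for w v1 v2
  proof -
    have a1: "adjU es w v1" using mem[OF e1] unfolding adjU_def by blast
    have a2: "adjU es w v2" using mem[OF e2] unfolding adjU_def by blast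
    obtain S where S: "v1\<in>S" "v2\<notin>S"
      "\<forall>k<length es. fst(es!k)\<noteq>w \<longrightarrow> snd(es!k)\<noteq>w \<longrightarrow> (fst(es!k)\<in>S \<longleftrightarrow> snd(es!k)\<in>S)"
      using brU[OF a1 a2 ne12] by blast
    have "\<forall>a b. (a,b)\<in>E \<longrightarrow> a\<noteq>w \<longrightarrow> b\<noteq>w \<longrightarrow> (a\<in>S \<longleftrightarrow> b\<in>S)"
    proof (intro allI impI)
      fix a b assume "(a,b)\<in>E" "a\<noteq>w" "b\<noteq>w"
      then obtain k where k: "k<length es" "es!k = (a,b) \<or> es!k = (b,a)" using mem by blast
      have Sk: "fst(es!k)\<noteq>w \<longrightarrow> snd(es!k)\<noteq>w \<longrightarrow> (fst(es!k)\<in>S \<longleftrightarrow> snd(es!k)\<in>S)"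
        using S(3) k(1) by auto
      from k(2) show "a\<in>S \<longleftrightarrow> b\<in>S"
      proof
        assume "es!k = (a,b)" thus ?thesis using Sk \<open>a\<noteq>w\<close> \<open>b\<noteq>w\<close> by simp
      next
        assume "es!k = (b,a)" thus ?thesis using Sk \<open>a\<noteq>w\<close> \<open>b\<noteq>w\<close> by simp
      qed
    qed
    thus ?thesis using S by blast
  qed
  define h where "h = (\<lambda>p::nat\<times>nat. z (fst p) * z (snd p))"
  have Eim: "E = (\<lambda>k. orient (\<sigma> k) (es!k)) ` {..<length es}"
    unfolding E_def oriented_edges_def by auto
  have inj: "inj_on (\<lambda>k. orient (\<sigma> k) (es!k)) {..<length es}"
  proof
    fix k l assume kl: "k\<in>{..<length es}" "l\<in>{..<length es}" "orient (\<sigma> k) (es!k) = orient (\<sigma> l) (es!l)"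
    then have "es!k = es!l \<or> es!k = (snd(es!l), fst(es!l))"
      unfolding orient_def by (cases "\<sigma> k"; cases "\<sigma> l"; cases "es!k"; cases "es!l") auto
    moreover have "es!k \<noteq> (snd(es!l), fst(es!l))"
    proof
      assume "es!k = (snd(es!l), fst(es!l))"
      moreover have "es!k \<in> set es" "es!l \<in> set es" using kl by auto
      ultimately show False using nrev by (cases "es!l") auto
    qed
    ultimately show "k = l" using dist kl by (simp add: nth_eq_iff_index_eq)
  qed
  have "(\<Sum>p\<in>E. h p) = (\<Sum>k<length es. h (orient (\<sigma> k) (es!k)))"
    unfolding Eim by (rule sum.reindex[OF inj, unfolded comp_def])
  also have "\<dots> = (\<Sum>k<length es. z (fst (es!k)) * z (snd (es!k)))"
    unfolding h_def by (intro sum.cong refl) (rule h_orient)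
  also have "\<dots> = sum_list (map (\<lambda>e. z (fst e) * z (snd e)) es)"
    by (simp add: sum_list_sum_nth atLeast0LessThan)
  finally have hs: "(\<Sum>p\<in>E. z (fst p) * z (snd p)) = sum_list (map (\<lambda>e. z (fst e) * z (snd e)) es)"
    unfolding h_def .
  have "(\<forall>a\<in>V. \<forall>b\<in>V. (a,b)\<in>E\<^sup>* \<longrightarrow> (b,a)\<in>E\<^sup>* \<longrightarrow> a = b) \<longrightarrow> (\<exists>y. Qf V E y < 0)"
  proof
    assume an: "\<forall>a\<in>V. \<forall>b\<in>V. (a,b)\<in>E\<^sup>* \<longrightarrow> (b,a)\<in>E\<^sup>* \<longrightarrow> a = b"
    have "Qf V E (\<lambda>b. z b - (\<Sum>c\<in>{c\<in>V. (b,c)\<in>E}. z c)) < 0"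
      using tree_Qf[OF fin sub irr an br, of z] hs neg by simp
    thus "\<exists>y. Qf V E y < 0" by blast
  qed
  thus ?thesis unfolding goodD_def E_def using fin ne sub[unfolded E_def] by simp
qed

abbreviation "es3 \<equiv> [(0::nat,1::nat),(1,2),(2,3),(3,4),(0,5),(5,6),(6,7),(0,8)]"
definition S3 :: "nat \<Rightarrow> nat \<Rightarrow> nat set" where
  "S3 w v = (let e = (\<lambda>c::nat. if c \<le> 4 then 4 else if c \<le> 7 then 7 else (8::nat)) in
     if w < v then {v..e v} else {0..8} - {w..e w})"
lemma F3_brU':
  assumes "adjU es3 w v1" "adjU es3 w v2" "v1\<noteq>v2"
  shows "v1 \<in> S3 w v1 \<and> v2 \<notin> S3 w v1 \<and> (\<forall>e\<in>set es3. fst e \<noteq> w \<longrightarrow> snd e \<noteq> w \<longrightarrow> (fst e \<in> S3 w v1 \<longleftrightarrow> snd e \<in> S3 w v1))"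
proof -
  have "(w,v1)\<in>set es3 \<or> (v1,w)\<in>set es3" using assms(1) unfolding adjU_set .
  then have c: "(w,v1) \<in> {(0,1),(1,2),(2,3),(3,4),(0,5),(5,6),(6,7),(0,8),(1,0),(2,1),(3,2),(4,3),(5,0),(6,5),(7,6),(8,0)}"
    by auto
  have v2: "(w,v2)\<in>set es3 \<or> (v2,w)\<in>set es3" using assms(2) unfolding adjU_set .
  from c show ?thesis
    apply (simp only: insert_iff empty_iff prod.inject)
    apply (elim disjE conjE)
    using v2 assms(3) apply (simp_all add: S3_def)
    by auto
qed

lemma F3_brU:
  assumes "adjU es3 w v1" "adjU es3 w v2" "v1\<noteq>v2"
  shows "\<exists>S. v1\<in>S \<and> v2\<notin>S \<and> (\<forall>k<length es3. fst(es3!k)\<noteq>w \<longrightarrow> snd(es3!k)\<noteq>w \<longrightarrow> (fst(es3!k)\<in>S \<longleftrightarrow> snd(es3!k)\<in>S))"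
  using F3_brU'[OF assms] unfolding all_set_conv_all_nth by blast

lemma F3_good: "goodD (F3 \<sigma>)"
  unfolding F3_def
proof (rule tree_case[where z = "\<lambda>i. [8,6,4,2,1,6,4,2,4] ! i"])
  show "finite {0..8::nat}" by simp
  show "{0..8::nat} \<noteq> {}" by simp
  show "\<forall>k<length es3. fst(es3!k)\<in>{0..8} \<and> snd(es3!k)\<in>{0..8} \<and> fst(es3!k) \<noteq> snd(es3!k)"
    unfolding all_set_conv_all_nth[symmetric, where P = "\<lambda>e. fst e \<in> _ \<and> snd e \<in> _ \<and> fst e \<noteq> snd e"] by simp
  show "distinct es3" by simp
  show "\<forall>(a,b)\<in>set es3. (b,a) \<notin> set es3" by simp
  show "\<And>w v1 v2. adjU es3 w v1 \<Longrightarrow> adjU es3 w v2 \<Longrightarrow> v1\<noteq>v2 \<Longrightarrow>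
       \<exists>S. v1\<in>S \<and> v2\<notin>S \<and> (\<forall>k<length es3. fst(es3!k)\<noteq>w \<longrightarrow> snd(es3!k)\<noteq>w \<longrightarrow> (fst(es3!k)\<in>S \<longleftrightarrow> snd(es3!k)\<in>S))"
    by (rule F3_brU)
  have V: "{0..8::nat} = {0,1,2,3,4,5,6,7,8}" by auto
  show "(\<Sum>a\<in>{0..8}. ([8,6,4,2,1,6,4,2,4] ! a) * ([8,6,4,2,1,6,4,2,4] ! a)) -
     sum_list (map (\<lambda>e. ([8,6,4,2,1,6,4,2,4] ! (fst e)) * ([8,6,4,2,1,6,4,2,4] ! (snd e))) es3) < (0::real)"
    unfolding V by simp
qed

abbreviation "es4 \<equiv> [(0::nat,1::nat),(1,2),(2,3),(3,4),(4,5),(5,6),(0,7),(7,8),(0,9)]"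
definition S4 :: "nat \<Rightarrow> nat \<Rightarrow> nat set" where
  "S4 w v = (let e = (\<lambda>c::nat. if c \<le> 6 then 6 else if c \<le> 8 then 8 else (9::nat)) in
     if w < v then {v..e v} else {0..9} - {w..e w})"

lemma F4_brU':
  assumes "adjU es4 w v1" "adjU es4 w v2" "v1\<noteq>v2"
  shows "v1 \<in> S4 w v1 \<and> v2 \<notin> S4 w v1 \<and> (\<forall>e\<in>set es4. fst e \<noteq> w \<longrightarrow> snd e \<noteq> w \<longrightarrow> (fst e \<in> S4 w v1 \<longleftrightarrow> snd e \<in> S4 w v1))"
proof -
  have "(w,v1)\<in>set es4 \<or> (v1,w)\<in>set es4" using assms(1) unfolding adjU_set .
  then have c: "(w,v1) \<in> {(0,1),(1,2),(2,3),(3,4),(4,5),(5,6),(0,7),(7,8),(0,9),(1,0),(2,1),(3,2),(4,3),(5,4),(6,5),(7,0),(8,7),(9,0)}"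
    by auto
  have v2: "(w,v2)\<in>set es4 \<or> (v2,w)\<in>set es4" using assms(2) unfolding adjU_set .
  from c show ?thesis
    apply (simp only: insert_iff empty_iff prod.inject)
    apply (elim disjE conjE)
    using v2 assms(3) apply (simp_all add: S4_def)
    by auto
qed

lemma F4_brU:
  assumes "adjU es4 w v1" "adjU es4 w v2" "v1\<noteq>v2"
  shows "\<exists>S. v1\<in>S \<and> v2\<notin>S \<and> (\<forall>k<length es4. fst(es4!k)\<noteq>w \<longrightarrow> snd(es4!k)\<noteq>w \<longrightarrow> (fst(es4!k)\<in>S \<longleftrightarrow> snd(es4!k)\<in>S))"
  using F4_brU'[OF assms] unfolding all_set_conv_all_nth by blast

lemma F4_good: "goodD (F4 \<sigma>)"
  unfolding F4_def
proof (rule tree_case[where z = "\<lambda>i. [12,10,8,6,4,2,1,8,4,6] ! i"])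
  show "finite {0..9::nat}" by simp
  show "{0..9::nat} \<noteq> {}" by simp
  show "\<forall>k<length es4. fst(es4!k)\<in>{0..9} \<and> snd(es4!k)\<in>{0..9} \<and> fst(es4!k) \<noteq> snd(es4!k)"
    unfolding all_set_conv_all_nth[symmetric, where P = "\<lambda>e. fst e \<in> _ \<and> snd e \<in> _ \<and> fst e \<noteq> snd e"] by simp
  show "distinct es4" by simp
  show "\<forall>(a,b)\<in>set es4. (b,a) \<notin> set es4" by simp
  show "\<And>w v1 v2. adjU es4 w v1 \<Longrightarrow> adjU es4 w v2 \<Longrightarrow> v1\<noteq>v2 \<Longrightarrow>
       \<exists>S. v1\<in>S \<and> v2\<notin>S \<and> (\<forall>k<length es4. fst(es4!k)\<noteq>w \<longrightarrow> snd(es4!k)\<noteq>w \<longrightarrow> (fst(es4!k)\<in>S \<longleftrightarrow> snd(es4!k)\<in>S))"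
    by (rule F4_brU)
  have V: "{0..9::nat} = {0,1,2,3,4,5,6,7,8,9}" by auto
  show "(\<Sum>a\<in>{0..9}. ([12,10,8,6,4,2,1,8,4,6] ! a) * ([12,10,8,6,4,2,1,8,4,6] ! a)) -
     sum_list (map (\<lambda>e. ([12,10,8,6,4,2,1,8,4,6] ! (fst e)) * ([12,10,8,6,4,2,1,8,4,6] ! (snd e))) es4) < (0::real)"
    unfolding V by simp
qed

lemma direct_good:
  assumes fin: "finite V" and ne: "V \<noteq> {}" and sub: "E \<subseteq> V \<times> V"
    and rf: "\<And>a. P a a" and cl: "\<And>a b c. P a b \<Longrightarrow> (b,c)\<in>E \<Longrightarrow> P a c"
    and pa: "\<And>a b. P a b \<Longrightarrow> (a,b)\<in>E\<^sup>*"
    and neg: "(\<Sum>a\<in>V. \<Sum>b\<in>V. y a * y b * (if P a b then 1 else 0)) < (0::real)"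
  shows "goodD (V,E)"
proof -
  have eq: "(a,b)\<in>E\<^sup>* \<longleftrightarrow> P a b" for a b
  proof
    assume "(a,b)\<in>E\<^sup>*" thus "P a b"
      by (induction rule: rtrancl_induct) (auto intro: rf cl)
  qed (rule pa)
  have "Qf V E y < 0" unfolding Qf_def eq using neg .
  thus ?thesis unfolding goodD_def using fin ne sub by auto
qed

lemma chain_rtr: "chain8 \<subseteq> E \<Longrightarrow> i \<le> j \<Longrightarrow> j \<le> 7 \<Longrightarrow> (i,j) \<in> E\<^sup>*"
proof (induction j)
  case 0 thus ?case by simp
next
  case (Suc j)
  show ?case
  proof (cases "i = Suc j")
    case True thus ?thesis by simp
  next
    case False
    then have "(i,j)\<in>E\<^sup>*" using Suc by auto
    moreover have "(j, Suc j) \<in> E" using Suc.prems unfolding chain8_def by auto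
    ultimately show ?thesis by auto
  qed
qed

lemma V5: "{0..4::nat} = {0,1,2,3,4}" by auto
lemma V10: "{0..9::nat} = {0,1,2,3,4,5,6,7,8,9}" by auto

lemma two: "(a,c)\<in>E \<Longrightarrow> (c,b)\<in>E \<Longrightarrow> (a,b)\<in>E\<^sup>*"
  by (meson r_into_rtrancl rtrancl_into_rtrancl)

lemma F1T: "goodD (F1 True)"
  unfolding F1_def orient_def
  apply (rule direct_good[where P = "\<lambda>a b. a=b \<or> (a\<le>1 \<and> 2\<le>b \<and> b\<le>3) \<or> (a=1 \<and> b=4)"
        and y = "\<lambda>i. [-15, -19, 17, 13, 8] ! i"])
  subgoal by simp
  subgoal by simp
  subgoal by auto
  subgoal by simp
  subgoal by auto
  subgoal for a b
  proof -
    assume "a=b \<or> (a\<le>1 \<and> 2\<le>b \<and> b\<le>3) \<or> (a=1 \<and> b=4)"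
    then have "(a = b) \<or> ((a,b) \<in> {(0,2),(0,3),(1,2),(1,3),(1,4)})" by auto
    then consider "a = b" | "(a,b) \<in> {(0,2),(0,3),(1,2),(1,3),(1,4)}" by blast
    then show ?thesis
    proof cases
      case 1 thus ?thesis by simp
    next
      case 2 thus ?thesis by (intro r_into_rtrancl) auto
    qed
  qed
  subgoal by (simp add: V5)
  done

lemma F1F: "goodD (F1 False)"
  unfolding F1_def orient_def
  apply (rule direct_good[where P = "\<lambda>a b. a=b \<or> (a\<le>1 \<and> 2\<le>b \<and> b\<le>3) \<or> (a=4 \<and> 1\<le>b \<and> b\<le>3)"
        and y = "\<lambda>i. [15, 11, -17, -13, 8] ! i"])
  subgoal by simp
  subgoal by simp
  subgoal by auto
  subgoal by simp
  subgoal by auto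
  subgoal for a b
  proof -
    assume "a=b \<or> (a\<le>1 \<and> 2\<le>b \<and> b\<le>3) \<or> (a=4 \<and> 1\<le>b \<and> b\<le>3)"
    then have "(a = b) \<or> ((a,b) \<in> {(0,2),(0,3),(1,2),(1,3),(4,1)}) \<or> ((a,b) = (4,2)) \<or> ((a,b) = (4,3))" by auto
    then consider "a = b" | "(a,b) \<in> {(0,2),(0,3),(1,2),(1,3),(4,1)}" | "(a,b) = (4,2)" | "(a,b) = (4,3)" by blast
    then show ?thesis
    proof cases
      case 1 thus ?thesis by simp
    next
      case 2 thus ?thesis by (intro r_into_rtrancl) auto
    next
      case 3 thus ?thesis by simp (rule two[where c=1]; simp)
    next
      case 4 thus ?thesis by simp (rule two[where c=1]; simp)
    qed
  qed
  subgoal by (simp add: V5)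
  done

lemma F2T: "goodD (F2 True)"
  unfolding F2_def orient_def
  apply (rule direct_good[where P = "\<lambda>a b. a=b \<or> (a\<le>1 \<and> 2\<le>b \<and> b\<le>3) \<or> (b=4 \<and> (a=3 \<or> a\<le>1))"
        and y = "\<lambda>i. [-2, -2, 2, 1, 1] ! i"])
  subgoal by simp
  subgoal by simp
  subgoal by auto
  subgoal by simp
  subgoal by auto
  subgoal for a b
  proof -
    assume "a=b \<or> (a\<le>1 \<and> 2\<le>b \<and> b\<le>3) \<or> (b=4 \<and> (a=3 \<or> a\<le>1))"
    then have "(a = b) \<or> ((a,b) \<in> {(0,2),(0,3),(1,2),(1,3),(3,4)}) \<or> ((a,b) = (0,4)) \<or> ((a,b) = (1,4))" by auto
    then consider "a = b" | "(a,b) \<in> {(0,2),(0,3),(1,2),(1,3),(3,4)}" | "(a,b) = (0,4)" | "(a,b) = (1,4)" by blast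
    then show ?thesis
    proof cases
      case 1 thus ?thesis by simp
    next
      case 2 thus ?thesis by (intro r_into_rtrancl) auto
    next
      case 3 thus ?thesis by simp (rule two[where c=3]; simp)
    next
      case 4 thus ?thesis by simp (rule two[where c=3]; simp)
    qed
  qed
  subgoal by (simp add: V5)
  done

lemma F2F: "goodD (F2 False)"
  unfolding F2_def orient_def
  apply (rule direct_good[where P = "\<lambda>a b. a=b \<or> (a\<le>1 \<and> 2\<le>b \<and> b\<le>3) \<or> (a=4 \<and> b=3)"
        and y = "\<lambda>i. [2, 2, -2, -2, 1] ! i"])
  subgoal by simp
  subgoal by simp
  subgoal by auto
  subgoal by simp
  subgoal by auto
  subgoal for a b
  proof -
    assume "a=b \<or> (a\<le>1 \<and> 2\<le>b \<and> b\<le>3) \<or> (a=4 \<and> b=3)"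
    then have "(a = b) \<or> ((a,b) \<in> {(0,2),(0,3),(1,2),(1,3),(4,3)})" by auto
    then consider "a = b" | "(a,b) \<in> {(0,2),(0,3),(1,2),(1,3),(4,3)}" by blast
    then show ?thesis
    proof cases
      case 1 thus ?thesis by simp
    next
      case 2 thus ?thesis by (intro r_into_rtrancl) auto
    qed
  qed
  subgoal by (simp add: V5)
  done
lemma F5T: "goodD (F5 True)"
  unfolding F5_def orient_def
  apply (rule direct_good[where P = "\<lambda>a b. (a=b \<or> (a<b \<and> b\<le>7) \<or> (a=0 \<and> b=8) \<or> (a=8 \<and> b=7)) \<or> (b=9 \<and> a\<le>8)"
        and y = "\<lambda>i. [5,-2,-2,-2,-2,-2,-2,5,-7,4] ! i"])
  subgoal by simp
  subgoal by simp
  subgoal by (auto simp: chain8_def)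
  subgoal by simp
  subgoal by (auto simp: chain8_def)
  subgoal for a b
  proof -
    assume "(a=b \<or> (a<b \<and> b\<le>7) \<or> (a=0 \<and> b=8) \<or> (a=8 \<and> b=7)) \<or> (b=9 \<and> a\<le>8)"
    then have "(a = b) \<or> (a < b \<and> b \<le> 7) \<or> ((a,b) \<in> {(0,8),(8,7),(7,9)}) \<or> (a \<le> 7 \<and> b = 9) \<or> ((a,b) = (8,9))" by auto
    then consider "a = b" | "a < b \<and> b \<le> 7" | "(a,b) \<in> {(0,8),(8,7),(7,9)}" | "a \<le> 7 \<and> b = 9" | "(a,b) = (8,9)" by blast
    then show ?thesis
    proof cases
      case 1 thus ?thesis by simp
    next
      case 2 thus ?thesis by (intro chain_rtr) (auto simp: chain8_def)
    next
      case 3 thus ?thesis by (intro r_into_rtrancl) auto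
    next
      case 4 thus ?thesis by simp (rule rtrancl_into_rtrancl[where b=7], rule chain_rtr, auto simp: chain8_def)
    next
      case 5 thus ?thesis by simp (rule two[where c=7]; simp)
    qed
  qed
  subgoal by (simp add: V10)
  done

lemma F5F: "goodD (F5 False)"
  unfolding F5_def orient_def
  apply (rule direct_good[where P = "\<lambda>a b. (a=b \<or> (a<b \<and> b\<le>7) \<or> (a=0 \<and> b=8) \<or> (a=8 \<and> b=7)) \<or> (a=9 \<and> b=7)"
        and y = "\<lambda>i. [-5,2,2,2,2,2,2,-9,7,4] ! i"])
  subgoal by simp
  subgoal by simp
  subgoal by (auto simp: chain8_def)
  subgoal by simp
  subgoal by (auto simp: chain8_def)
  subgoal for a b
  proof -
    assume "(a=b \<or> (a<b \<and> b\<le>7) \<or> (a=0 \<and> b=8) \<or> (a=8 \<and> b=7)) \<or> (a=9 \<and> b=7)"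
    then have "(a = b) \<or> (a < b \<and> b \<le> 7) \<or> ((a,b) \<in> {(0,8),(8,7),(9,7)})" by auto
    then consider "a = b" | "a < b \<and> b \<le> 7" | "(a,b) \<in> {(0,8),(8,7),(9,7)}" by blast
    then show ?thesis
    proof cases
      case 1 thus ?thesis by simp
    next
      case 2 thus ?thesis by (intro chain_rtr) (auto simp: chain8_def)
    next
      case 3 thus ?thesis by (intro r_into_rtrancl) auto
    qed
  qed
  subgoal by (simp add: V10)
  done

lemma F6T: "goodD (F6 True)"
  unfolding F6_def orient_def
  apply (rule direct_good[where P = "\<lambda>a b. (a=b \<or> (a<b \<and> b\<le>7) \<or> (a=0 \<and> b=8) \<or> (a=8 \<and> b=7)) \<or> (a=0 \<and> b=9)"
        and y = "\<lambda>i. [-9,2,2,2,2,2,2,-5,7,4] ! i"])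
  subgoal by simp
  subgoal by simp
  subgoal by (auto simp: chain8_def)
  subgoal by simp
  subgoal by (auto simp: chain8_def)
  subgoal for a b
  proof -
    assume "(a=b \<or> (a<b \<and> b\<le>7) \<or> (a=0 \<and> b=8) \<or> (a=8 \<and> b=7)) \<or> (a=0 \<and> b=9)"
    then have "(a = b) \<or> (a < b \<and> b \<le> 7) \<or> ((a,b) \<in> {(0,8),(8,7),(0,9)})" by auto
    then consider "a = b" | "a < b \<and> b \<le> 7" | "(a,b) \<in> {(0,8),(8,7),(0,9)}" by blast
    then show ?thesis
    proof cases
      case 1 thus ?thesis by simp
    next
      case 2 thus ?thesis by (intro chain_rtr) (auto simp: chain8_def)
    next
      case 3 thus ?thesis by (intro r_into_rtrancl) auto
    qed
  qed
  subgoal by (simp add: V10)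
  done

lemma F6F: "goodD (F6 False)"
  unfolding F6_def orient_def
  apply (rule direct_good[where P = "\<lambda>a b. (a=b \<or> (a<b \<and> b\<le>7) \<or> (a=0 \<and> b=8) \<or> (a=8 \<and> b=7)) \<or> (a=9 \<and> b\<le>8)"
        and y = "\<lambda>i. [5,-2,-2,-2,-2,-2,-2,5,-7,4] ! i"])
  subgoal by simp
  subgoal by simp
  subgoal by (auto simp: chain8_def)
  subgoal by simp
  subgoal by (auto simp: chain8_def)
  subgoal for a b
  proof -
    assume "(a=b \<or> (a<b \<and> b\<le>7) \<or> (a=0 \<and> b=8) \<or> (a=8 \<and> b=7)) \<or> (a=9 \<and> b\<le>8)"
    then have "(a = b) \<or> (a < b \<and> b \<le> 7) \<or> ((a,b) \<in> {(0,8),(8,7),(9,0)}) \<or> (a = 9 \<and> 1 \<le> b \<and> b \<le> 7) \<or> ((a,b) = (9,8))" by auto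
    then consider "a = b" | "a < b \<and> b \<le> 7" | "(a,b) \<in> {(0,8),(8,7),(9,0)}" | "a = 9 \<and> 1 \<le> b \<and> b \<le> 7" | "(a,b) = (9,8)" by blast
    then show ?thesis
    proof cases
      case 1 thus ?thesis by simp
    next
      case 2 thus ?thesis by (intro chain_rtr) (auto simp: chain8_def)
    next
      case 3 thus ?thesis by (intro r_into_rtrancl) auto
    next
      case 4 thus ?thesis by simp (rule converse_rtrancl_into_rtrancl[where b=0], simp, rule chain_rtr, auto simp: chain8_def)
    next
      case 5 thus ?thesis by simp (rule two[where c=0]; simp)
    qed
  qed
  subgoal by (simp add: V10)
  done

lemma F7G: "goodD (F7)"
  unfolding F7_def orient_def
  apply (rule direct_good[where P = "\<lambda>a b. a=b \<or> (a<b \<and> b\<le>7) \<or> (a=0 \<and> (b=8 \<or> b=9)) \<or> (a=8 \<and> (b=7 \<or> b=9)) \<or> (a=9 \<and> b=7)"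
        and y = "\<lambda>i. [-7,2,2,2,2,2,2,-7,5,4] ! i"])
  subgoal by simp
  subgoal by simp
  subgoal by (auto simp: chain8_def)
  subgoal by simp
  subgoal by (auto simp: chain8_def)
  subgoal for a b
  proof -
    assume "a=b \<or> (a<b \<and> b\<le>7) \<or> (a=0 \<and> (b=8 \<or> b=9)) \<or> (a=8 \<and> (b=7 \<or> b=9)) \<or> (a=9 \<and> b=7)"
    then have "(a = b) \<or> (a < b \<and> b \<le> 7) \<or> ((a,b) \<in> {(0,8),(8,9),(9,7)}) \<or> ((a,b) = (0,9)) \<or> ((a,b) = (8,7))" by auto
    then consider "a = b" | "a < b \<and> b \<le> 7" | "(a,b) \<in> {(0,8),(8,9),(9,7)}" | "(a,b) = (0,9)" | "(a,b) = (8,7)" by blast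
    then show ?thesis
    proof cases
      case 1 thus ?thesis by simp
    next
      case 2 thus ?thesis by (intro chain_rtr) (auto simp: chain8_def)
    next
      case 3 thus ?thesis by (intro r_into_rtrancl) auto
    next
      case 4 thus ?thesis by simp (rule two[where c=8]; simp)
    next
      case 5 thus ?thesis by simp (rule two[where c=9]; simp)
    qed
  qed
  subgoal by (simp add: V10)
  done

lemma good_transfer:
  assumes g: "goodD D" and po: "partial_order_on {1..n} r" and iso: "digraph_iso D (hasse n r)"
  shows "indefinite_poset n r"
proof -
  have iso': "digraph_iso (fst D, snd D) (hasse n r)" using iso by simp
  show ?thesis
    using g unfolding goodD_def
    using transfer[OF po iso'] by blast
qed

lemma all_good: "goodD (F1 b)" "goodD (F2 b)" "goodD (F3 \<sigma>)" "goodD (F4 \<sigma>)"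
  "goodD (F5 b)" "goodD (F6 b)" "goodD F7"
  using F1T F1F F2T F2F F3_good F4_good F5T F5F F6T F6F F7G by (cases b; simp)+

theorem lemma4p3:
  fixes n :: nat and r :: "(nat \<times> nat) set"
  assumes "partial_order_on {1..n} r"
    and "(\<exists>b. digraph_iso (F1 b) (hasse n r)) \<or> (\<exists>b. digraph_iso (F2 b) (hasse n r)) \<or>
         (\<exists>\<sigma>. digraph_iso (F3 \<sigma>) (hasse n r)) \<or> (\<exists>\<sigma>. digraph_iso (F4 \<sigma>) (hasse n r)) \<or>
         (\<exists>b. digraph_iso (F5 b) (hasse n r)) \<or> (\<exists>b. digraph_iso (F6 b) (hasse n r)) \<or>
         digraph_iso F7 (hasse n r)"
  shows "indefinite_poset n r"
  using assms(2) good_transfer[OF _ assms(1)] all_good by blast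

end
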